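(* Let $\boldsymbol\alpha\in\mathbb C^d$, let $\boldsymbol\mu\in V(\boldsymbol\alpha)$ satisfy $\mathcal F(\boldsymbol\alpha+\boldsymbol\mu)=\mathcal F(\boldsymbol\alpha)$, and let $\tau$ be a face of the cone $\mathbb R_{\ge0}A$. Then $E_\tau(\boldsymbol\alpha+\boldsymbol\mu)=\emptyset$ if and only if $E_\tau(\boldsymbol\alpha)=\emptyset$. Moreover, if $E_\tau(\boldsymbol\alpha)\ne\emptyset$, then $E_\tau(\boldsymbol\alpha+\boldsymbol\mu)=\boldsymbol\mu+E_\tau(\boldsymbol\alpha)$.
   Context: $A\subset\mathbb Z^d$ is a finite set generating the group $\mathbb Z^d$; $\mathbb NA$ the monoid generated by $A$. For a facet $\sigma$ of the cone $\mathbb R_{\ge0}A$, $F_\sigma$ is its primitive integral support function: the unique linear form on $\mathbb R^d$ (extended $\mathbb C$-linearly to $\mathbb C^d$) with $F_\sigma(\mathbb R_{\ge0}A)\ge0$, $F_\sigma(\sigma)=0$, $F_\sigma(\mathbb Z^d)=\mathbb Z$. For $\boldsymbol\alpha\in\mathbb C^d$, $\mathcal F(\boldsymbol\alpha)=\{\sigma \text{ facet}: F_\sigma(\boldsymbol\alpha)\in\mathbb Z\}$ and $V(\boldsymbol\alpha)=\bigcap_{\sigma\in\mathcal F(\boldsymbol\alpha)}\{F_\sigma=0\}\subseteq\mathbb C^d$. For a face $\tau$, $E_\tau(\boldsymbol\alpha)=\{\boldsymbol\lambda\in\mathbb C(A\cap\tau)/\mathbb Z(A\cap\tau):\boldsymbol\alpha-\boldsymbol\lambda\in\mathbb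 NA+\mathbb Z(A\cap\tau)\}$. *)

theory Defs
  imports "HOL-Analysis.Analysis"
begin

text \<open>Lattice Z^d is int^'n (d = CARD('n)); R^d is real^'n; C^d is complex^'n.\<close>

definition rvec :: "int^'n \<Rightarrow> real^'n" where
  "rvec z = (\<chi> i. of_int (z$i))"

definition cvec :: "int^'n \<Rightarrow> complex^'n" where
  "cvec z = (\<chi> i. of_int (z$i))"

definition polcone :: "(int^'n) set \<Rightarrow> (real^'n) set" where
  "polcone A = {(\<Sum>a\<in>A. c a *\<^sub>R rvec a) | c. \<forall>a\<in>A. c a \<ge> 0}"

definition monoidNA :: "(int^'n) set \<Rightarrow> (int^'n) set" where
  "monoidNA A = {(\<chi> i. \<Sum>a\<in>A. int (c a) * a$i) | c. True}"

definition latspan :: "(int^'n) set \<Rightarrow> (int^'n) set" where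
  "latspan B = {(\<chi> i. \<Sum>a\<in>B. k a * a$i) | k. True}"

definition cspan :: "(int^'n) set \<Rightarrow> (complex^'n) set" where
  "cspan B = {(\<chi> i. \<Sum>a\<in>B. k a * of_int (a$i)) | k. True}"

definition Aface :: "(int^'n) set \<Rightarrow> (real^'n) set \<Rightarrow> (int^'n) set" where
  "Aface A \<tau> = {a\<in>A. rvec a \<in> \<tau>}"

text \<open>Primitive integral support function of a facet, as a real vector w with F(x) = w . x.\<close>
definition supp_vec :: "(int^'n) set \<Rightarrow> (real^'n) set \<Rightarrow> real^'n" where
  "supp_vec A \<sigma> = (THE w. (\<forall>x\<in>polcone A. w \<bullet> x \<ge> 0) \<and> (\<forall>x\<in>\<sigma>. w \<bullet> x = 0)
       \<and> range (\<lambda>z. w \<bullet> rvec z) = \<int>)"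

definition Fval :: "(int^'n) set \<Rightarrow> (real^'n) set \<Rightarrow> complex^'n \<Rightarrow> complex" where
  "Fval A \<sigma> v = (\<Sum>i\<in>UNIV. complex_of_real (supp_vec A \<sigma> $ i) * v$i)"

definition facets :: "(int^'n) set \<Rightarrow> (real^'n) set set" where
  "facets A = {\<sigma>. \<sigma> facet_of polcone A}"

definition Fset :: "(int^'n) set \<Rightarrow> complex^'n \<Rightarrow> (real^'n) set set" where
  "Fset A \<alpha> = {\<sigma>\<in>facets A. Fval A \<sigma> \<alpha> \<in> \<int>}"

definition Vset :: "(int^'n) set \<Rightarrow> complex^'n \<Rightarrow> (complex^'n) set" where
  "Vset A \<alpha> = {v. \<forall>\<sigma>\<in>Fset A \<alpha>. Fval A \<sigma> v = 0}"

text \<open>E_tau(alpha): elements of C(A\<inter>tau)/Z(A\<inter>tau) represented as cosets (sets).\<close>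
definition Eset :: "(int^'n) set \<Rightarrow> (real^'n) set \<Rightarrow> complex^'n \<Rightarrow> (complex^'n) set set" where
  "Eset A \<tau> \<alpha> =
     {{l + cvec z | z. z \<in> latspan (Aface A \<tau>)} | l.
        l \<in> cspan (Aface A \<tau>) \<and>
        \<alpha> - l \<in> cvec ` {x + y | x y. x \<in> monoidNA A \<and> y \<in> latspan (Aface A \<tau>)}}"

end

theory Submission
  imports Defs
begin


lemma rvec_add: "rvec (x + y) = rvec x + rvec y"
  by (simp add: rvec_def vec_eq_iff)
lemma rvec_inj: "inj rvec"
  by (auto simp: inj_def rvec_def vec_eq_iff)

lemma polcone_hull:
  fixes A :: "(int^'n) set"
  assumes "finite A"
  shows "polcone A = convex_cone hull (rvec ` A)"
proof
  have "(\<Sum>a\<in>B. c a *\<^sub>R rvec a) \<in> convex_cone hull (rvec ` A)"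
    if "finite B" "B \<subseteq> A" "\<forall>a\<in>B. c a \<ge> 0" for B c
    using that
  proof (induction B rule: finite_induct)
    case empty then show ?case by (simp add: convex_cone_hull_contains_0)
  next
    case (insert x F)
    then show ?case
      by (simp add: convex_cone_hull_add convex_cone_hull_mul hull_inc)
  qed
  then show "polcone A \<subseteq> convex_cone hull (rvec ` A)"
    using assms by (auto simp: polcone_def)
next
  have cc: "convex_cone (polcone A)"
    unfolding convex_cone_def
  proof (intro conjI)
    show "polcone A \<noteq> {}"
      by (auto simp: polcone_def intro!: exI[of _ "\<lambda>_. 0"])
    show "convex (polcone A)"
      unfolding convex_def polcone_def
    proof (clarify)
      fix u v :: real and c d :: "int^'n \<Rightarrow> real"
      assume "\<forall>a\<in>A. 0 \<le> c a" "\<forall>a\<in>A. 0 \<le> d a" "0 \<le> u" "0 \<le> v" "u + v = 1"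
      then show "\<exists>e. u *\<^sub>R (\<Sum>a\<in>A. c a *\<^sub>R rvec a) + v *\<^sub>R (\<Sum>a\<in>A. d a *\<^sub>R rvec a) =
               (\<Sum>a\<in>A. e a *\<^sub>R rvec a) \<and> (\<forall>a\<in>A. 0 \<le> e a)"
        by (intro exI[of _ "\<lambda>a. u * c a + v * d a"])
           (auto simp: scaleR_sum_right sum.distrib[symmetric] scaleR_add_left)
    qed
    show "conic (polcone A)"
      unfolding conic_def polcone_def
    proof (clarify)
      fix x :: real and c :: "int^'n \<Rightarrow> real"
      assume "\<forall>a\<in>A. 0 \<le> c a" "0 \<le> x"
      then show "\<exists>e. x *\<^sub>R (\<Sum>a\<in>A. c a *\<^sub>R rvec a) =
               (\<Sum>a\<in>A. e a *\<^sub>R rvec a) \<and> (\<forall>a\<in>A. 0 \<le> e a)"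
        by (intro exI[of _ "\<lambda>a. x * c a"]) (auto simp: scaleR_sum_right)
    qed
  qed
  have "rvec ` A \<subseteq> polcone A"
  proof
    fix y assume "y \<in> rvec ` A"
    then obtain a where a: "a \<in> A" "y = rvec a" by auto
    have "(\<Sum>b\<in>A. (if b = a then 1 else 0) *\<^sub>R rvec b) = rvec a"
    proof -
      have "(\<Sum>b\<in>A. (if b = a then 1 else 0) *\<^sub>R rvec b) = (\<Sum>b\<in>A. if b = a then rvec a else 0)"
        by (rule sum.cong) auto
      then show ?thesis using a assms by simp
    qed
    then show "y \<in> polcone A"
      unfolding polcone_def using a by (intro CollectI exI[of _ "\<lambda>b. if b = a then 1 else 0"]) auto
  qed
  then show "convex_cone hull (rvec ` A) \<subseteq> polcone A"
    using cc by (simp add: hull_minimal)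
qed

lemma span_rvec_UNIV:
  fixes A :: "(int^'n) set"
  assumes "latspan A = UNIV" "finite A"
  shows "span (rvec ` A) = UNIV"
proof -
  have "axis i 1 \<in> span (rvec ` A)" for i :: 'n
  proof -
    have "(axis i 1 :: int^'n) \<in> latspan A" using assms by simp
    then obtain k where k: "(axis i 1 :: int^'n) = (\<chi> j. \<Sum>a\<in>A. k a * a$j)"
      by (auto simp: latspan_def)
    have "(axis i 1 :: real^'n) = rvec (axis i 1)"
      by (simp add: rvec_def axis_def vec_eq_iff)
    also have "\<dots> = (\<Sum>a\<in>A. of_int (k a) *\<^sub>R rvec a)"
      by (subst k) (simp add: rvec_def vec_eq_iff sum_component)
    also have "\<dots> \<in> span (rvec ` A)"
      by (intro span_sum span_mul span_base) auto
    finally show ?thesis .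
  qed
  then have "Basis \<subseteq> span (rvec ` A)"
    by (auto simp: Basis_vec_def)
  then show ?thesis
    by (metis span_Basis span_mono span_span top.extremum_uniqueI)
qed



lemma S_basic:
  fixes A :: "(int^'n) set"
  assumes "finite A"
  shows "polyhedron (polcone A)" "convex (polcone A)" "conic (polcone A)" "0 \<in> polcone A"
  using assms
  by (simp_all add: polcone_hull polyhedron_convex_cone_hull convex_convex_cone_hull
      conic_convex_cone_hull convex_cone_hull_contains_0)

lemma S_full:
  fixes A :: "(int^'n) set"
  assumes "finite A" "latspan A = UNIV"
  shows "span (polcone A) = UNIV" "affine hull (polcone A) = UNIV"
    "aff_dim (polcone A) = int CARD('n)"
proof -
  have "rvec ` A \<subseteq> polcone A" using assms by (simp add: polcone_hull hull_subset)
  then show sp: "span (polcone A) = UNIV"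
    using span_rvec_UNIV[OF assms(2,1)] by (metis span_mono top.extremum_uniqueI)
  show ah: "affine hull (polcone A) = UNIV"
    using S_basic(4)[OF assms(1)] sp by (simp add: affine_hull_span_0 hull_inc)
  show "aff_dim (polcone A) = int CARD('n)"
    using ah by (metis aff_dim_UNIV aff_dim_affine_hull DIM_cart DIM_real mult_1_right)
qed

lemma face_zero:
  assumes "conic S" "T face_of S" "T \<noteq> {}"
  shows "0 \<in> T"
proof -
  obtain x where "x \<in> T" using assms by auto
  then have "0 *\<^sub>R x \<in> T" using face_of_conic[OF assms(1,2)] by (intro conicD) auto
  then show ?thesis by simp
qed

lemma face_split:
  assumes "conic S" "T face_of S" "x \<in> T" "p \<in> S" "q \<in> S" "x = p + q"
  shows "p \<in> T"
proof (cases "p = q")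
  case True
  then have "p = (1/2) *\<^sub>R x" using assms(6) by (simp add: scaleR_2[symmetric])
  then show ?thesis using face_of_conic[OF assms(1,2)] assms(3) by (metis conicD divide_nonneg_nonneg zero_le_one zero_le_numeral)
next
  case False
  have "2 *\<^sub>R p \<in> S" "2 *\<^sub>R q \<in> S" using assms by (auto intro: conicD)
  moreover have "x \<in> open_segment (2 *\<^sub>R p) (2 *\<^sub>R q)"
  proof -
    have "midpoint (2 *\<^sub>R p) (2 *\<^sub>R q) \<in> open_segment (2 *\<^sub>R p) (2 *\<^sub>R q)"
      using False by simp
    moreover have "midpoint (2 *\<^sub>R p) (2 *\<^sub>R q) = x"
      using assms(6) by (simp add: midpoint_def algebra_simps)
    ultimately show ?thesis by simp
  qed
  ultimately have "2 *\<^sub>R p \<in> T" using assms(2,3) face_ofD by blast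
  then have "(1/2) *\<^sub>R (2 *\<^sub>R p) \<in> T"
    using conicD[OF face_of_conic[OF assms(1,2)] \<open>2 *\<^sub>R p \<in> T\<close>, of "1/2"] by simp
  then show ?thesis by simp
qed

lemma face_gen:
  fixes A :: "(int^'n) set"
  assumes "finite A" "T face_of polcone A"
  shows "T \<subseteq> span (rvec ` Aface A T)"
proof
  fix x assume xT: "x \<in> T"
  then have "x \<in> polcone A" using assms(2) face_of_imp_subset by blast
  then obtain c where c: "x = (\<Sum>a\<in>A. c a *\<^sub>R rvec a)" "\<forall>a\<in>A. c a \<ge> 0"
    by (auto simp: polcone_def)
  have cz: "c a = 0" if "a \<in> A" "a \<notin> Aface A T" for a
  proof (rule ccontr)
    assume "c a \<noteq> 0"
    then have cp: "c a > 0" using c that by force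
    let ?p = "c a *\<^sub>R rvec a" and ?q = "(\<Sum>b\<in>A-{a}. c b *\<^sub>R rvec b)"
    have "x = ?p + ?q" using c(1) assms(1) that(1) by (simp add: sum.remove)
    moreover have "?p \<in> polcone A"
      using S_basic(3)[OF assms(1)] c that assms(1)
      by (intro conicD) (auto simp: polcone_hull hull_inc)
    moreover have "?q \<in> polcone A"
      unfolding polcone_def
      by (intro CollectI exI[of _ "\<lambda>b. if b = a then 0 else c b"])
         (use c assms(1) that in \<open>auto simp: sum.remove if_distrib cong: if_cong\<close>)
    ultimately have "?p \<in> T"
      using face_split[OF S_basic(3)[OF assms(1)] assms(2) xT] by blast
    then have "(1 / c a) *\<^sub>R ?p \<in> T"
      using conicD[OF face_of_conic[OF S_basic(3)[OF assms(1)] assms(2)] \<open>?p \<in> T\<close>, of "1 / c a"] cp by simp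
    then have "rvec a \<in> T" using cp by simp
    then show False using that by (auto simp: Aface_def)
  qed
  have "x = (\<Sum>a\<in>Aface A T. c a *\<^sub>R rvec a)"
    unfolding c(1) using assms(1) cz
    by (intro sum.mono_neutral_right) (auto simp: Aface_def)
  also have "\<dots> \<in> span (rvec ` Aface A T)"
    by (intro span_sum span_mul span_base) auto
  finally show "x \<in> span (rvec ` Aface A T)" .
qed

lemma Aface_sub: "rvec ` Aface A T \<subseteq> T"
  by (auto simp: Aface_def)

lemma facet_dim:
  fixes A :: "(int^'n) set"
  assumes "finite A" "latspan A = UNIV" "F facet_of polcone A"
  shows "0 \<in> F" "dim F = CARD('n) - 1"
proof -
  show z: "0 \<in> F"
    using assms(3) S_basic(3)[OF assms(1)] by (intro face_zero) (auto simp: facet_of_def)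
  have "aff_dim F = int CARD('n) - 1"
    using assms(3) S_full[OF assms(1,2)] by (simp add: facet_of_def)
  then show "dim F = CARD('n) - 1"
    using aff_dim_zero[of F] z by (simp add: hull_inc)
qed

lemma facet_ker:
  fixes A :: "(int^'n) set"
  assumes "finite A" "latspan A = UNIV" "F facet_of polcone A"
    and "u \<noteq> 0" "\<forall>x\<in>F. u \<bullet> x = 0"
  shows "{x. u \<bullet> x = 0} = span F"
proof -
  have "span F \<subseteq> {x. u \<bullet> x = 0}"
    using assms(5) by (intro span_minimal) (auto simp: subspace_hyperplane)
  moreover have "dim {x. u \<bullet> x = 0} \<le> dim (span F)"
    using dim_hyperplane[OF assms(4)] facet_dim[OF assms(1-3)] by simp
  ultimately show ?thesis
    by (metis subspace_dim_equal subspace_hyperplane subspace_span)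
qed



lemma proportional:
  fixes a w :: "'a::real_inner"
  assumes "a \<noteq> 0" "\<forall>x. a \<bullet> x = 0 \<longrightarrow> w \<bullet> x = 0"
  shows "w = ((w \<bullet> a) / (a \<bullet> a)) *\<^sub>R a"
proof -
  define r where "r = w - ((w \<bullet> a) / (a \<bullet> a)) *\<^sub>R a"
  have "a \<bullet> r = 0" using assms(1) by (simp add: r_def inner_diff_right inner_commute)
  then have "w \<bullet> r = 0" using assms(2) by blast
  then have "r \<bullet> r = 0"
    using \<open>a \<bullet> r = 0\<close> by (simp add: r_def inner_diff_left inner_commute)
  then show ?thesis by (simp add: r_def)
qed

definition Pw :: "(int^'n) set \<Rightarrow> (real^'n) set \<Rightarrow> real^'n \<Rightarrow> bool" where
  "Pw A F w \<longleftrightarrow> (\<forall>x\<in>polcone A. w \<bullet> x \<ge> 0) \<and> (\<forall>x\<in>F. w \<bullet> x = 0)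
       \<and> range (\<lambda>z. w \<bullet> rvec z) = \<int>"

lemma Pw_nonzero: "Pw A F w \<Longrightarrow> w \<noteq> 0"
proof
  assume "Pw A F w" "w = 0"
  then have "(1::real) \<in> range (\<lambda>z. w \<bullet> rvec z)" by (simp add: Pw_def)
  with \<open>w = 0\<close> show False by auto
qed

lemma Pw_unique:
  fixes A :: "(int^'n) set"
  assumes "finite A" "latspan A = UNIV" "F facet_of polcone A"
    and "Pw A F w1" "Pw A F w2"
  shows "w1 = w2"
proof -
  have n1: "w1 \<noteq> 0" and n2: "w2 \<noteq> 0" using assms Pw_nonzero by auto
  have k1: "{x. w1 \<bullet> x = 0} = span F"
    using facet_ker[OF assms(1-3) n1] assms(4) by (simp add: Pw_def)
  have k2: "{x. w2 \<bullet> x = 0} = span F"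
    using facet_ker[OF assms(1-3) n2] assms(5) by (simp add: Pw_def)
  define l where "l = (w2 \<bullet> w1) / (w1 \<bullet> w1)"
  have wl: "w2 = l *\<^sub>R w1"
    unfolding l_def using k1 k2 n1 by (intro proportional) (auto simp: set_eq_iff)
  obtain y where y: "y \<in> polcone A" "w1 \<bullet> y \<noteq> 0"
  proof (rule ccontr)
    assume "\<not> thesis"
    then have "polcone A \<subseteq> {x. w1 \<bullet> x = 0}" using that by auto
    then have "span (polcone A) \<subseteq> {x. w1 \<bullet> x = 0}"
      by (intro span_minimal) (auto simp: subspace_hyperplane)
    then have "w1 \<in> {x. w1 \<bullet> x = 0}" using S_full[OF assms(1,2)] by blast
    then have "w1 \<bullet> w1 = 0" by simp
    then show False using n1 by simp
  qed
  then have y1: "w1 \<bullet> y > 0" using assms(4) unfolding Pw_def by force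
  have "w2 \<bullet> y \<ge> 0" using assms(5) y unfolding Pw_def by blast
  then have "l * (w1 \<bullet> y) \<ge> 0" using wl by simp
  then have "l \<ge> 0" using y1 by (simp add: zero_le_mult_iff)
  moreover have "l \<noteq> 0" using wl n2 by auto
  ultimately have lp: "l > 0" by simp
  obtain z1 where z1: "w1 \<bullet> rvec z1 = 1"
    using assms(4) unfolding Pw_def by (metis Ints_1 rangeE)
  obtain z2 where z2: "w2 \<bullet> rvec z2 = 1"
    using assms(5) unfolding Pw_def by (metis Ints_1 rangeE)
  have "l \<in> \<int>" using assms(5) z1 wl unfolding Pw_def by (metis inner_scaleR_left mult_1_right rangeI)
  then obtain m where m: "l = of_int m" by (auto elim: Ints_cases)
  have "w1 \<bullet> rvec z2 \<in> \<int>" using assms(4) unfolding Pw_def by blast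
  then obtain n where n: "w1 \<bullet> rvec z2 = of_int n" by (auto elim: Ints_cases)
  have "of_int (m * n) = (1::real)" using z2 wl m n by simp
  then have "m * n = 1" by linarith
  moreover have "m > 0" using lp m by simp
  ultimately have "m = 1" using pos_zmult_eq_1_iff by blast
  then show ?thesis using wl m by simp
qed

lemma supp_vec_prop:
  fixes A :: "(int^'n) set"
  assumes "finite A" "latspan A = UNIV" "F facet_of polcone A"
    and "Pw A F w"
  shows "Pw A F (supp_vec A F)"
proof -
  have "\<exists>!w. Pw A F w" using assms Pw_unique by blast
  then show ?thesis unfolding supp_vec_def Pw_def[symmetric] by (rule theI')
qed



definition ip :: "int^'n \<Rightarrow> int^'n \<Rightarrow> int" where
  "ip c z = (\<Sum>j\<in>UNIV. c$j * z$j)"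

lemma rvec_inner: "rvec c \<bullet> rvec z = of_int (ip c z)"
  by (simp add: inner_vec_def rvec_def ip_def)

lemma ip_add: "ip c (x + y) = ip c x + ip c y"
  by (simp add: ip_def algebra_simps sum.distrib)
lemma ip_diff: "ip c (x - y) = ip c x - ip c y"
  by (simp add: ip_def algebra_simps sum_subtractf)
lemma ip_smult: "ip c (k *s x) = k * ip c x"
  by (simp add: ip_def sum_distrib_left algebra_simps)
lemma ip_axis: "ip c (axis j 1) = c$j"
  by (simp add: ip_def axis_def if_distrib cong: if_cong)

lemma primitive:
  fixes c :: "int^'n"
  assumes "c \<noteq> 0"
  obtains w :: "int^'n" and g :: int where "g > 0" "rvec c = of_int g *\<^sub>R rvec w"
    "range (\<lambda>z. rvec w \<bullet> rvec z) = \<int>"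
proof -
  define I where "I = range (ip c)"
  obtain j where j: "c$j \<noteq> 0" using assms by (auto simp: vec_eq_iff)
  have "\<bar>c$j\<bar> \<in> I"
  proof (cases "c$j > 0")
    case True then show ?thesis unfolding I_def using ip_axis[of c j] by (metis abs_of_pos rangeI)
  next
    case False
    then have "\<bar>c$j\<bar> = ip c ((-1) *s axis j 1)" using ip_smult[of c "-1" "axis j 1"] ip_axis[of c j] by simp
    then show ?thesis unfolding I_def by simp
  qed
  define g where "g = (LEAST n::nat. n > 0 \<and> int n \<in> I)"
  have ex: "\<exists>n::nat. n > 0 \<and> int n \<in> I"
    using \<open>\<bar>c$j\<bar> \<in> I\<close> j by (intro exI[of _ "nat \<bar>c$j\<bar>"]) auto
  have g: "g > 0" "int g \<in> I" using LeastI_ex[OF ex] unfolding g_def by auto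
  have gmin: "\<not> (n > 0 \<and> int n \<in> I)" if "n < g" for n
    using not_less_Least[of n "\<lambda>n. n > 0 \<and> int n \<in> I"] that unfolding g_def by blast
  obtain z0 where z0: "ip c z0 = int g" using g(2) unfolding I_def by auto
  have dvd: "int g dvd m" if mI0: "m \<in> I" for m
  proof -
    obtain z where z: "ip c z = m" using mI0 unfolding I_def by auto
    have nn: "0 \<le> m mod int g" using g(1) by simp
    have e: "ip c (z - (m div int g) *s z0) = m mod int g"
      by (simp add: ip_diff ip_smult z z0 minus_div_mult_eq_mod[symmetric] mult.commute)
    have "int (nat (m mod int g)) = ip c (z - (m div int g) *s z0)"
      using nn e by simp
    then have mI: "int (nat (m mod int g)) \<in> I" unfolding I_def by (metis rangeI)
    have "m mod int g < int g" using g(1) by simp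
    then have lt: "nat (m mod int g) < g" using nn by linarith
    have "nat (m mod int g) = 0" using gmin[OF lt] mI nn by (auto split: if_splits)
    then have "m mod int g = 0" using nn by simp
    then show ?thesis by auto
  qed
  define w where "w = (\<chi> i. c$i div int g)"
  have "int g dvd c$i" for i
    using dvd[of "c$i"] ip_axis[of c i] unfolding I_def by (metis rangeI)
  then have cw: "c = (\<chi> i. int g * w$i)"
    unfolding w_def by (simp add: vec_eq_iff)
  have ipw: "ip c z = int g * ip w z" for z
    by (subst cw) (simp add: ip_def sum_distrib_left algebra_simps)
  show ?thesis
  proof
    show "0 < int g" using g by simp
    show "rvec c = real_of_int (int g) *\<^sub>R rvec w"
      by (subst cw) (simp add: rvec_def vec_eq_iff)
    have "ip w z0 = 1" using ipw[of z0] z0 g(1) by simp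
    have "of_int k \<in> range (\<lambda>z. rvec w \<bullet> rvec z)" for k
      using \<open>ip w z0 = 1\<close> by (intro image_eqI[of _ _ "k *s z0"]) (auto simp: rvec_inner ip_smult)
    then show "range (\<lambda>z. rvec w \<bullet> rvec z) = \<int>"
      by (auto simp: rvec_inner Ints_def)
  qed
qed



lemma int_normal:
  fixes A :: "(int^'n) set"
  assumes "finite A" "latspan A = UNIV" "F facet_of polcone A"
  obtains c :: "int^'n" where "c \<noteq> 0" "\<forall>x\<in>F. rvec c \<bullet> x = 0"
proof -
  let ?B = "rvec ` Aface A F"
  have fB: "finite ?B" using assms(1) by (auto simp: Aface_def)
  have BF: "?B \<subseteq> F" by (rule Aface_sub)
  have FB: "F \<subseteq> span ?B"
    using face_gen[OF assms(1) facet_of_imp_face_of[OF assms(3)]] .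
  obtain B' where B': "B' \<subseteq> ?B" "independent B'" "?B \<subseteq> span B'"
    using maximal_independent_subset by blast
  have fB': "finite B'" using B'(1) fB finite_subset by blast
  have s1: "span B' \<subseteq> span F" using B'(1) BF by (meson span_mono subset_trans)
  have "span ?B \<subseteq> span B'" using B'(3) by (simp add: span_minimal)
  then have "F \<subseteq> span B'" using FB by blast
  then have s2: "span F \<subseteq> span B'" by (simp add: span_minimal)
  have spB: "span B' = span F" using s1 s2 by blast
  have cardB': "card B' = CARD('n) - 1"
    using dim_span_eq_card_independent[OF B'(2)] spB facet_dim(2)[OF assms] by (metis dim_span)
  obtain i0 :: 'n where True by simp
  have "card (UNIV - {i0}) = CARD('n) - 1" by (simp add: card_Diff_singleton)
  then obtain g where g: "bij_betw g (UNIV - {i0}) B'"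
    using finite_same_card_bij[of "UNIV - {i0}" B'] fB' cardB' by auto
  define M :: "real^'n \<Rightarrow> real^'n^'n" where "M x = (\<chi> j. if j = i0 then x else g j)" for x
  define cr where "cr = (\<chi> j. det (M (axis j 1)))"
  have fx: "det (M x) = cr \<bullet> x" for x
  proof -
    have "M x = (\<chi> i. if i = i0 then (\<Sum>j\<in>UNIV. x$j *s axis j 1) else g i)"
      unfolding M_def by (simp only: basis_expansion)
    then have "det (M x) = (\<Sum>j\<in>UNIV. det ((\<chi> i. if i = i0 then x$j *s axis j 1 else g i) :: real^'n^'n))"
      using det_linear_row_sum[of UNIV i0 "\<lambda>i j. x$j *s axis j 1" g] by simp
    also have "\<dots> = (\<Sum>j\<in>UNIV. x$j * det (M (axis j 1)))"
      unfolding M_def by (simp add: det_row_mul[of i0 "x$_" "\<lambda>i. axis _ 1" g])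
    also have "\<dots> = cr \<bullet> x"
      by (simp add: cr_def inner_vec_def mult.commute)
    finally show ?thesis .
  qed
  have entries: "(M (axis j 1))$i$k \<in> \<int>" for i j k
  proof (cases "i = i0")
    case True then show ?thesis by (simp add: M_def axis_def)
  next
    case False
    then have "g i \<in> B'" using g by (auto simp: bij_betw_def)
    then obtain a where "g i = rvec a" using B'(1) by auto
    then show ?thesis using False by (simp add: M_def rvec_def)
  qed
  have crint: "cr$j \<in> \<int>" for j
    unfolding cr_def det_def using entries by (auto intro!: Ints_sum Ints_mult Ints_prod)
  define c where "c = (\<chi> j. \<lfloor>cr$j\<rfloor>)"
  have rc: "rvec c = cr"
    using crint by (auto simp: rvec_def c_def vec_eq_iff elim!: Ints_cases)
  have vanB: "cr \<bullet> b = 0" if bB: "b \<in> B'" for b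
  proof -
    obtain j where j: "j \<in> UNIV - {i0}" "g j = b" using g bB by (auto simp: bij_betw_def)
    have "row i0 (M b) = row j (M b)" using j by (simp add: M_def row_def)
    then have "det (M b) = 0" using j by (intro det_identical_rows[of i0 j]) auto
    then show ?thesis using fx by simp
  qed
  have "span B' \<subseteq> {x. cr \<bullet> x = 0}"
    using vanB by (intro span_minimal) (auto simp: subspace_hyperplane)
  then have van: "\<forall>x\<in>F. cr \<bullet> x = 0" using \<open>F \<subseteq> span B'\<close> by blast
  have dimB': "dim B' = CARD('n) - 1" using cardB' B'(2) by (simp add: dim_eq_card_independent)
  have "span B' \<noteq> UNIV"
  proof
    assume "span B' = UNIV"
    then have "dim B' = CARD('n)" using dim_eq_full[of B'] by simp
    then show False using dimB' by (metis Suc_pred' zero_less_card_finite n_not_Suc_n)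
  qed
  then obtain x where x: "x \<notin> span B'" by auto
  have rows: "rows (M x) = insert x B'"
  proof -
    have "rows (M x) = {if i = i0 then x else g i | i. True}"
      by (simp add: rows_def row_def M_def)
    also have "\<dots> = insert x (g ` (UNIV - {i0}))" by auto
    also have "\<dots> = insert x B'" using g by (simp add: bij_betw_def)
    finally show ?thesis .
  qed
  have "dim (insert x B') = CARD('n)"
    using x dimB' by (simp add: dim_insert)
  then have "span (rows (M x)) = UNIV" using rows dim_eq_full[of "insert x B'"] by simp
  then have "invertible (M x)"
    using matrix_left_invertible_span_rows invertible_left_inverse by blast
  then have "det (M x) \<noteq> 0" by (simp add: invertible_det_nz)
  then have "cr \<noteq> 0" using fx by auto
  then have "c \<noteq> 0" using rc by (auto simp: rvec_def vec_eq_iff) (metis of_int_0)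
  then show ?thesis using that van rc by simp
qed



lemma rvec_uminus: "rvec (- z) = - rvec z"
  by (simp add: rvec_def vec_eq_iff)

lemma supp_vec_Pw:
  fixes A :: "(int^'n) set"
  assumes "finite A" "latspan A = UNIV" "F facet_of polcone A"
  shows "Pw A F (supp_vec A F)"
proof -
  obtain c :: "int^'n" where c: "c \<noteq> 0" "\<forall>x\<in>F. rvec c \<bullet> x = 0"
    using int_normal[OF assms] by blast
  obtain w :: "int^'n" and g :: int where wg: "g > 0" "rvec c = of_int g *\<^sub>R rvec w"
    "range (\<lambda>z. rvec w \<bullet> rvec z) = \<int>"
    using primitive[OF c(1)] by blast
  have wF: "\<forall>x\<in>F. rvec w \<bullet> x = 0" using c(2) wg(1,2) by simp
  have wnz: "rvec w \<noteq> 0"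
  proof
    assume "rvec w = 0"
    then have "(1::real) \<in> range (\<lambda>z. rvec w \<bullet> rvec z)" using wg(3) by simp
    with \<open>rvec w = 0\<close> show False by auto
  qed
  obtain a b where ab: "a \<noteq> 0" "polcone A \<subseteq> {x. a \<bullet> x \<le> b}" "F = polcone A \<inter> {x. a \<bullet> x = b}"
    using facet_of_polyhedron[OF S_basic(1)[OF assms(1)] assms(3)] by blast
  have "b = 0" using facet_dim(1)[OF assms] ab(3) by auto
  then have aF: "\<forall>x\<in>F. a \<bullet> x = 0" using ab(3) by auto
  have k1: "{x. a \<bullet> x = 0} = span F" using facet_ker[OF assms ab(1) aF] .
  have k2: "{x. rvec w \<bullet> x = 0} = span F" using facet_ker[OF assms wnz wF] .
  define l where "l = (rvec w \<bullet> a) / (a \<bullet> a)"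
  have wl: "rvec w = l *\<^sub>R a"
    unfolding l_def using k1 k2 ab(1) by (intro proportional) (auto simp: set_eq_iff)
  have "l \<noteq> 0" using wl wnz by auto
  then consider "l < 0" | "l > 0" by linarith
  then show ?thesis
  proof cases
    case 1
    have "Pw A F (rvec w)"
      unfolding Pw_def
    proof (intro conjI ballI)
      fix x assume "x \<in> polcone A"
      then have "a \<bullet> x \<le> 0" using ab(2) \<open>b = 0\<close> by auto
      then show "rvec w \<bullet> x \<ge> 0" using 1 wl by (simp add: mult_nonpos_nonpos)
    qed (use wF wg(3) in auto)
    then show ?thesis using supp_vec_prop[OF assms] by blast
  next
    case 2
    have "Pw A F (rvec (- w))"
      unfolding Pw_def
    proof (intro conjI)
      show "\<forall>x\<in>polcone A. rvec (- w) \<bullet> x \<ge> 0"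
      proof
        fix x assume "x \<in> polcone A"
        then have "a \<bullet> x \<le> 0" using ab(2) \<open>b = 0\<close> by auto
        then show "rvec (- w) \<bullet> x \<ge> 0" using 2 wl by (simp add: rvec_uminus mult_nonneg_nonpos)
      qed
    next
      show "\<forall>x\<in>F. rvec (- w) \<bullet> x = 0" using wF by (simp add: rvec_uminus)
    next
      have "(\<lambda>z. rvec (- w) \<bullet> rvec z) = (\<lambda>z. rvec w \<bullet> rvec z) \<circ> uminus"
        by (simp add: fun_eq_iff rvec_uminus)
      moreover have "range (uminus :: int^'n \<Rightarrow> int^'n) = UNIV"
        by (metis surj_def minus_minus)
      ultimately show "range (\<lambda>z. rvec (- w) \<bullet> rvec z) = \<int>"
        using wg(3) by (metis image_comp)
    qed
    then show ?thesis using supp_vec_prop[OF assms] by blast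
  qed
qed



lemma small_pos:
  fixes p q :: "'h \<Rightarrow> real"
  assumes "finite H" "\<forall>h\<in>H. p h < 0"
  obtains e :: real where "e > 0" "\<forall>h\<in>H. p h + e * q h < 0"
proof -
  have "\<forall>h\<in>H. eventually (\<lambda>e. p h + e * q h < 0) (at_right (0::real))"
  proof
    fix h assume "h \<in> H"
    have "((\<lambda>e. p h + e * q h) \<longlongrightarrow> p h + 0 * q h) (at_right (0::real))"
      by (intro tendsto_intros)
    then show "eventually (\<lambda>e. p h + e * q h < 0) (at_right (0::real))"
      using \<open>h \<in> H\<close> assms(2) by (intro order_tendstoD(2)) auto
  qed
  then have "eventually (\<lambda>e. \<forall>h\<in>H. p h + e * q h < 0) (at_right (0::real))"
    by (rule eventually_ball_finite[OF assms(1)])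
  then have "eventually (\<lambda>e. e > 0 \<and> (\<forall>h\<in>H. p h + e * q h < 0)) (at_right (0::real))"
    using eventually_at_right_less[of "0::real"] by (simp add: eventually_conj_iff)
  then obtain e where "e > 0 \<and> (\<forall>h\<in>H. p h + e * q h < 0)"
    using eventually_happens'[OF trivial_limit_at_right_real] by blast
  then show ?thesis using that by blast
qed

lemma geo:
  fixes A :: "(int^'n) set"
  assumes "finite A" "latspan A = UNIV" "T face_of polcone A" "T \<noteq> {}"
    and vh: "\<And>F. F facet_of polcone A \<Longrightarrow> T \<subseteq> F \<Longrightarrow> supp_vec A F \<bullet> v = 0"
  shows "v \<in> span (rvec ` Aface A T)"
proof -
  let ?S = "polcone A"
  have spT: "span T \<subseteq> span (rvec ` Aface A T)"
    using face_gen[OF assms(1,3)] by (simp add: span_minimal)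
  have "v \<in> span T"
  proof (cases "T = ?S")
    case True
    then show ?thesis using S_full[OF assms(1,2)] by simp
  next
    case TS: False
    have ahS: "affine hull ?S = UNIV" using S_full[OF assms(1,2)] by simp
    obtain FF where FF: "finite FF" "?S = affine hull ?S \<inter> \<Inter>FF"
      "\<forall>h\<in>FF. \<exists>a b. a \<noteq> 0 \<and> h = {x. a \<bullet> x \<le> b}"
      "\<forall>F'. F' \<subset> FF \<longrightarrow> ?S \<subset> affine hull ?S \<inter> \<Inter>F'"
      using S_basic(1)[OF assms(1)] by (simp only: polyhedron_Int_affine_minimal) blast
    obtain a where a: "\<forall>h\<in>FF. \<exists>b. a h \<noteq> 0 \<and> h = {x. a h \<bullet> x \<le> b}"
      using bchoice[OF FF(3)] by blast
    obtain b where b: "\<forall>h\<in>FF. a h \<noteq> 0 \<and> h = {x. a h \<bullet> x \<le> b h}"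
      using bchoice[OF a] by blast
    have ab: "\<And>h. h \<in> FF \<Longrightarrow> a h \<noteq> 0 \<and> h = {x. a h \<bullet> x \<le> b h}"
      using b by blast
    have min: "\<And>F'. F' \<subset> FF \<Longrightarrow> ?S \<subset> affine hull ?S \<inter> \<Inter>F'" using FF(4) by (simp only: all_simps)
    have facet_iff: "C facet_of ?S \<longleftrightarrow> (\<exists>h. h \<in> FF \<and> C = ?S \<inter> {x. a h \<bullet> x = b h})" for C
      by (rule facet_of_polyhedron_explicit[OF FF(1,2) ab min])
    have Teq: "T = \<Inter>{?S \<inter> {x. a h \<bullet> x = b h} | h. h \<in> FF \<and> T \<subseteq> ?S \<inter> {x. a h \<bullet> x = b h}}"
      by (rule face_of_polyhedron_explicit[OF FF(1,2) ab min assms(3,4) TS])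
    define H where "H = {h \<in> FF. T \<subseteq> ?S \<inter> {x. a h \<bullet> x = b h}}"
    have T0: "0 \<in> T" using face_zero[OF S_basic(3)[OF assms(1)] assms(3,4)] .
    have TsubS: "T \<subseteq> ?S" using assms(3) face_of_imp_subset by blast
    have Sin: "a h \<bullet> y \<le> b h" if "h \<in> FF" "y \<in> ?S" for h y
      using FF(2) that ab by auto
    have avH: "a h \<bullet> v = 0" if hH: "h \<in> H" for h
    proof -
      let ?F = "?S \<inter> {x. a h \<bullet> x = b h}"
      have hF: "h \<in> FF" and TF: "T \<subseteq> ?F" using hH by (auto simp: H_def)
      have fac: "?F facet_of ?S" using facet_iff hF by blast
      have "b h = 0" using TF T0 by auto
      then have aF: "\<forall>x\<in>?F. a h \<bullet> x = 0" by auto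
      have P: "Pw A ?F (supp_vec A ?F)" using supp_vec_Pw[OF assms(1,2) fac] .
      have "supp_vec A ?F \<bullet> v = 0" using vh[OF fac TF] .
      then have "v \<in> span ?F"
        using facet_ker[OF assms(1,2) fac Pw_nonzero[OF P]] P by (auto simp: Pw_def)
      moreover have "span ?F \<subseteq> {x. a h \<bullet> x = 0}"
        using aF by (intro span_minimal) (auto simp: subspace_hyperplane)
      ultimately show ?thesis by auto
    qed
    have "convex T" using assms(3) face_of_imp_convex by blast
    then obtain x where x: "x \<in> rel_interior T" using assms(4) rel_interior_eq_empty by blast
    have xT: "x \<in> T" using x rel_interior_subset by blast
    have strict: "a h \<bullet> x - b h < 0" if hFH: "h \<in> FF - H" for h
    proof -
      have "a h \<bullet> x \<le> b h" using Sin xT TsubS hFH by blast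
      moreover have "a h \<bullet> x \<noteq> b h"
      proof
        assume eq: "a h \<bullet> x = b h"
        have "(?S \<inter> {x. a h \<bullet> x = b h}) face_of ?S"
          using Sin hFH S_basic(2)[OF assms(1)] by (intro face_of_Int_supporting_hyperplane_le) auto
        moreover have "(?S \<inter> {x. a h \<bullet> x = b h}) \<inter> rel_interior T \<noteq> {}"
          using eq x xT TsubS by auto
        ultimately have "T \<subseteq> ?S \<inter> {x. a h \<bullet> x = b h}"
          using subset_of_face_of TsubS by blast
        then show False using hFH by (auto simp: H_def)
      qed
      ultimately show ?thesis by simp
    qed
    obtain e :: real where e: "e > 0" "\<forall>h\<in>FF - H. (a h \<bullet> x - b h) + e * (a h \<bullet> v) < 0"
      using small_pos[of "FF - H" "\<lambda>h. a h \<bullet> x - b h" "\<lambda>h. a h \<bullet> v"] FF(1) strict by blast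
    define y where "y = x + e *\<^sub>R v"
    have ay: "a h \<bullet> y = a h \<bullet> x + e * (a h \<bullet> v)" for h
      by (simp add: y_def inner_add_right)
    have "y \<in> \<Inter>FF"
    proof
      fix h assume hF: "h \<in> FF"
      have hdef: "h = {x. a h \<bullet> x \<le> b h}" using ab[OF hF] by blast
      have "a h \<bullet> y \<le> b h"
      proof (cases "h \<in> H")
        case True
        then show ?thesis using ay[of h] avH[OF True] Sin[OF hF] xT TsubS by auto
      next
        case False
        then show ?thesis using ay[of h] e(2) hF by force
      qed
      then show "y \<in> h" by (subst hdef) simp
    qed
    then have yS: "y \<in> ?S" using FF(2) ahS by blast
    have "y \<in> T"
    proof (subst Teq, intro InterI)
      fix C assume "C \<in> {?S \<inter> {x. a h \<bullet> x = b h} | h. h \<in> FF \<and> T \<subseteq> ?S \<inter> {x. a h \<bullet> x = b h}}"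
      then obtain h where h: "h \<in> FF" "T \<subseteq> ?S \<inter> {x. a h \<bullet> x = b h}" "C = ?S \<inter> {x. a h \<bullet> x = b h}"
        by blast
      have "h \<in> H" using h by (auto simp: H_def)
      then show "y \<in> C" using h yS ay avH xT by auto
    qed
    have "v = (1 / e) *\<^sub>R (y - x)" using e(1) by (simp add: y_def)
    also have "\<dots> \<in> span T"
      using \<open>y \<in> T\<close> xT by (intro span_mul span_diff span_base)
    finally show ?thesis .
  qed
  then show ?thesis using spT by blast
qed



lemma Fval_add: "Fval A F (u + v) = Fval A F u + Fval A F v"
  by (simp add: Fval_def algebra_simps sum.distrib)
lemma Fval_uminus: "Fval A F (- v) = - Fval A F v"
  by (simp add: Fval_def sum_negf)
lemma Fval_cvec: "Fval A F (cvec z) = of_real (supp_vec A F \<bullet> rvec z)"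
  by (simp add: Fval_def cvec_def rvec_def inner_vec_def)
lemma Fval_cspan:
  assumes "v \<in> cspan B" "\<forall>a\<in>B. supp_vec A F \<bullet> rvec a = 0"
  shows "Fval A F v = 0"
proof -
  obtain k where k: "v = (\<chi> i. \<Sum>a\<in>B. k a * of_int (a$i))" using assms(1) by (auto simp: cspan_def)
  have "Fval A F v = (\<Sum>i\<in>UNIV. \<Sum>a\<in>B. complex_of_real (supp_vec A F $ i) * (k a * of_int (a$i)))"
    by (simp add: Fval_def k sum_distrib_left)
  also have "\<dots> = (\<Sum>a\<in>B. k a * of_real (supp_vec A F \<bullet> rvec a))"
    by (subst sum.swap) (simp add: inner_vec_def rvec_def sum_distrib_left algebra_simps)
  also have "\<dots> = 0" using assms(2) by simp
  finally show ?thesis .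
qed

lemma Fval_ReIm:
  "Fval A F v = of_real (supp_vec A F \<bullet> (\<chi> i. Re (v$i))) + \<i> * of_real (supp_vec A F \<bullet> (\<chi> i. Im (v$i)))"
proof -
  have "Fval A F v = (\<Sum>i\<in>UNIV. complex_of_real (supp_vec A F $ i) * (of_real (Re (v$i)) + \<i> * of_real (Im (v$i))))"
    unfolding Fval_def by (simp add: complex_eq[symmetric])
  also have "\<dots> = of_real (supp_vec A F \<bullet> (\<chi> i. Re (v$i))) + \<i> * of_real (supp_vec A F \<bullet> (\<chi> i. Im (v$i)))"
    by (simp add: inner_vec_def algebra_simps sum.distrib sum_distrib_left)
  finally show ?thesis .
qed

lemma Fval_zero_parts:
  assumes "Fval A F v = 0"
  shows "supp_vec A F \<bullet> (\<chi> i. Re (v$i)) = 0" "supp_vec A F \<bullet> (\<chi> i. Im (v$i)) = 0"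
proof -
  have "Re (Fval A F v) = 0" "Im (Fval A F v) = 0" using assms by simp_all
  then show "supp_vec A F \<bullet> (\<chi> i. Re (v$i)) = 0" "supp_vec A F \<bullet> (\<chi> i. Im (v$i)) = 0"
    by (simp_all add: Fval_ReIm[of A F v])
qed

lemma cspanI: "v = (\<chi> i. \<Sum>a\<in>B. k a * of_int (a$i)) \<Longrightarrow> v \<in> cspan B"
  unfolding cspan_def by blast

lemma EsetI:
  assumes "l \<in> cspan (Aface A T)"
    "\<alpha> - l \<in> cvec ` {x + y | x y. x \<in> monoidNA A \<and> y \<in> latspan (Aface A T)}"
  shows "{l + cvec z | z. z \<in> latspan (Aface A T)} \<in> Eset A T \<alpha>"
  unfolding Eset_def using assms by blast

lemma span_rvec_repr:
  fixes B :: "(int^'n) set"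
  assumes "finite B" "x \<in> span (rvec ` B)"
  obtains u where "x = (\<chi> i. \<Sum>a\<in>B. u a * of_int (a$i))"
proof -
  obtain u where u: "x = (\<Sum>b\<in>rvec ` B. u b *\<^sub>R b)"
    using assms span_finite[of "rvec ` B"] by auto
  also have "\<dots> = (\<Sum>a\<in>B. u (rvec a) *\<^sub>R rvec a)"
  proof -
    have "inj_on rvec B" by (rule inj_on_subset[OF rvec_inj]) simp
    then show ?thesis by (simp add: sum.reindex)
  qed
  also have "\<dots> = (\<chi> i. \<Sum>a\<in>B. u (rvec a) * of_int (a$i))"
    by (simp add: vec_eq_iff sum_component rvec_def)
  finally show ?thesis by (rule that)
qed

lemma key:
  fixes A :: "(int^'n) set"
  assumes "finite A" "latspan A = UNIV" "T face_of polcone A" "T \<noteq> {}"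
    and "Eset A T \<alpha> \<noteq> {}" "\<mu> \<in> Vset A \<alpha>"
  shows "\<mu> \<in> cspan (Aface A T)"
proof -
  obtain l x y where l: "l \<in> cspan (Aface A T)" "\<alpha> - l = cvec (x + y)"
    using assms(5) unfolding Eset_def by blast
  have z: "Fval A F \<mu> = 0" if F: "F facet_of polcone A" "T \<subseteq> F" for F
  proof -
    have P: "Pw A F (supp_vec A F)" using supp_vec_Pw[OF assms(1,2) F(1)] .
    have van: "\<forall>a\<in>Aface A T. supp_vec A F \<bullet> rvec a = 0"
      using P F(2) Aface_sub unfolding Pw_def by blast
    have "\<alpha> = l + cvec (x + y)" using l(2) by (simp add: algebra_simps)
    then have "Fval A F \<alpha> = of_real (supp_vec A F \<bullet> rvec (x + y))"
      using Fval_cspan[OF l(1) van] by (simp add: Fval_add Fval_cvec)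
    moreover have "supp_vec A F \<bullet> rvec (x + y) \<in> \<int>" using P unfolding Pw_def by blast
    ultimately have "Fval A F \<alpha> \<in> \<int>" by (auto elim!: Ints_cases)
    then have "F \<in> Fset A \<alpha>" using F(1) by (simp add: Fset_def facets_def)
    then show ?thesis using assms(6) by (simp add: Vset_def)
  qed
  have fT: "finite (Aface A T)" using assms(1) by (simp add: Aface_def)
  have "(\<chi> i. Re (\<mu>$i)) \<in> span (rvec ` Aface A T)"
    using Fval_zero_parts(1)[OF z] by (intro geo[OF assms(1-4)]) auto
  then obtain u where u: "(\<chi> i. Re (\<mu>$i)) = (\<chi> i. \<Sum>a\<in>Aface A T. u a * of_int (a$i))"
    using span_rvec_repr[OF fT] by blast
  have "(\<chi> i. Im (\<mu>$i)) \<in> span (rvec ` Aface A T)"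
    using Fval_zero_parts(2)[OF z] by (intro geo[OF assms(1-4)]) auto
  then obtain u' where u': "(\<chi> i. Im (\<mu>$i)) = (\<chi> i. \<Sum>a\<in>Aface A T. u' a * of_int (a$i))"
    using span_rvec_repr[OF fT] by blast
  have "\<mu> = (\<chi> i. \<Sum>a\<in>Aface A T. (of_real (u a) + \<i> * of_real (u' a)) * of_int (a$i))"
  proof (subst vec_eq_iff, intro allI)
    fix i
    have r: "Re (\<mu>$i) = (\<Sum>a\<in>Aface A T. u a * of_int (a$i))" using u by (simp add: vec_eq_iff)
    have m: "Im (\<mu>$i) = (\<Sum>a\<in>Aface A T. u' a * of_int (a$i))" using u' by (simp add: vec_eq_iff)
    have "\<mu>$i = of_real (Re (\<mu>$i)) + \<i> * of_real (Im (\<mu>$i))" by (simp add: complex_eq[symmetric])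
    also have "\<dots> = (\<Sum>a\<in>Aface A T. (of_real (u a) + \<i> * of_real (u' a)) * of_int (a$i))"
      unfolding r m by (simp add: algebra_simps sum.distrib sum_distrib_left)
    finally show "\<mu>$i = (\<chi> i. \<Sum>a\<in>Aface A T. (of_real (u a) + \<i> * of_real (u' a)) * of_int (a$i))$i"
      by simp
  qed
  then show ?thesis by (rule cspanI)
qed

lemma cspan_add: "u \<in> cspan B \<Longrightarrow> v \<in> cspan B \<Longrightarrow> u + v \<in> cspan B"
proof -
  assume "u \<in> cspan B" "v \<in> cspan B"
  then obtain k k' where "u = (\<chi> i. \<Sum>a\<in>B. k a * of_int (a$i))" "v = (\<chi> i. \<Sum>a\<in>B. k' a * of_int (a$i))"
    by (auto simp: cspan_def)
  then have "u + v = (\<chi> i. \<Sum>a\<in>B. (k a + k' a) * of_int (a$i))"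
    by (simp add: vec_eq_iff algebra_simps sum.distrib)
  then show ?thesis by (rule cspanI)
qed

lemma cspan_uminus: "u \<in> cspan B \<Longrightarrow> - u \<in> cspan B"
proof -
  assume "u \<in> cspan B"
  then obtain k where "u = (\<chi> i. \<Sum>a\<in>B. k a * of_int (a$i))"
    by (auto simp: cspan_def)
  then have "- u = (\<chi> i. \<Sum>a\<in>B. (- k a) * of_int (a$i))"
    by (simp add: vec_eq_iff sum_negf)
  then show ?thesis by (rule cspanI)
qed

lemma coset_shift:
  "(\<lambda>x. \<mu> + x) ` {l + cvec z | z. z \<in> L} = {(\<mu> + l) + cvec z | z. z \<in> L}"
  by (auto simp: add.assoc image_iff)

lemma shift:
  assumes "\<mu> \<in> cspan (Aface A T)"
  shows "Eset A T (\<alpha> + \<mu>) = (\<lambda>S. (\<lambda>x. \<mu> + x) ` S) ` Eset A T \<alpha>"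
proof
  show "Eset A T (\<alpha> + \<mu>) \<subseteq> (\<lambda>S. (\<lambda>x. \<mu> + x) ` S) ` Eset A T \<alpha>"
  proof
    fix S assume "S \<in> Eset A T (\<alpha> + \<mu>)"
    then obtain l' where l': "S = {l' + cvec z | z. z \<in> latspan (Aface A T)}" "l' \<in> cspan (Aface A T)"
      "\<alpha> + \<mu> - l' \<in> cvec ` {x + y | x y. x \<in> monoidNA A \<and> y \<in> latspan (Aface A T)}"
      unfolding Eset_def by blast
    define l where "l = - \<mu> + l'"
    have lc: "l \<in> cspan (Aface A T)" unfolding l_def using assms l'(2) by (intro cspan_add cspan_uminus)
    have eq: "\<alpha> - l = \<alpha> + \<mu> - l'" by (simp add: l_def algebra_simps)
    have mem: "{l + cvec z | z. z \<in> latspan (Aface A T)} \<in> Eset A T \<alpha>"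
      by (intro EsetI lc) (simp only: eq l'(3))
    have "S = (\<lambda>x. \<mu> + x) ` {l + cvec z | z. z \<in> latspan (Aface A T)}"
      unfolding coset_shift l'(1) by (simp add: l_def)
    then show "S \<in> (\<lambda>S. (\<lambda>x. \<mu> + x) ` S) ` Eset A T \<alpha>" using mem by blast
  qed
next
  show "(\<lambda>S. (\<lambda>x. \<mu> + x) ` S) ` Eset A T \<alpha> \<subseteq> Eset A T (\<alpha> + \<mu>)"
  proof
    fix S' assume "S' \<in> (\<lambda>S. (\<lambda>x. \<mu> + x) ` S) ` Eset A T \<alpha>"
    then obtain l where l: "S' = (\<lambda>x. \<mu> + x) ` {l + cvec z | z. z \<in> latspan (Aface A T)}"
      "l \<in> cspan (Aface A T)"
      "\<alpha> - l \<in> cvec ` {x + y | x y. x \<in> monoidNA A \<and> y \<in> latspan (Aface A T)}"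
      unfolding Eset_def by blast
    have lc: "\<mu> + l \<in> cspan (Aface A T)" using assms l(2) by (intro cspan_add)
    have eq: "\<alpha> + \<mu> - (\<mu> + l) = \<alpha> - l" by (simp add: algebra_simps)
    show "S' \<in> Eset A T (\<alpha> + \<mu>)"
      unfolding l(1) coset_shift by (intro EsetI lc) (simp only: eq l(3))
  qed
qed

theorem lemma7p2:
  fixes A :: "(int^'n) set" and \<alpha> \<mu> :: "complex^'n" and \<tau> :: "(real^'n) set"
  assumes "finite A" and "latspan A = UNIV"
    and "\<mu> \<in> Vset A \<alpha>" and "Fset A (\<alpha> + \<mu>) = Fset A \<alpha>"
    and "\<tau> face_of polcone A" and "\<tau> \<noteq> {}"
  shows "(Eset A \<tau> (\<alpha> + \<mu>) = {} \<longleftrightarrow> Eset A \<tau> \<alpha> = {}) \<and>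
         (Eset A \<tau> \<alpha> \<noteq> {} \<longrightarrow>
            Eset A \<tau> (\<alpha> + \<mu>) = (\<lambda>S. (\<lambda>x. \<mu> + x) ` S) ` Eset A \<tau> \<alpha>)"
proof (cases "Eset A \<tau> \<alpha> = {}")
  case False
  have "\<mu> \<in> cspan (Aface A \<tau>)" using key[OF assms(1,2,5,6) False assms(3)] .
  then have "Eset A \<tau> (\<alpha> + \<mu>) = (\<lambda>S. (\<lambda>x. \<mu> + x) ` S) ` Eset A \<tau> \<alpha>" by (rule shift)
  then show ?thesis using False by auto
next
  case True
  have "Eset A \<tau> (\<alpha> + \<mu>) = {}"
  proof (rule ccontr)
    assume ne: "Eset A \<tau> (\<alpha> + \<mu>) \<noteq> {}"
    have "- \<mu> \<in> Vset A (\<alpha> + \<mu>)"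
      using assms(3,4) by (simp add: Vset_def Fval_uminus)
    then have "- \<mu> \<in> cspan (Aface A \<tau>)" using key[OF assms(1,2,5,6) ne] by blast
    then have "Eset A \<tau> (\<alpha> + \<mu> + - \<mu>) = (\<lambda>S. (\<lambda>x. - \<mu> + x) ` S) ` Eset A \<tau> (\<alpha> + \<mu>)"
      by (rule shift)
    then have "Eset A \<tau> \<alpha> \<noteq> {}" using ne by simp
    then show False using True by simp
  qed
  then show ?thesis using True by simp
qed

end
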